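(* In the line network model (see context) with $\ell\ge2$ links and any erasure probabilities $p_1,\dots,p_\ell\in[0,1)$, the process $(Y_k)_{1\le k\le n}$ is stochastically increasing: for all $1\le k\le k'\le n$ and all $\omega\in\mathbb{N}^{\ell-1}$, $$\mathbb{P}(Y_k\succeq\omega)\le\mathbb{P}(Y_{k'}\succeq\omega),$$ where $\succeq$ is the componentwise order on $\mathbb{N}^{\ell-1}$ ($a\succeq b$ iff $a_j\ge b_j$ for all $j$).
   Context: Line network model. Fix integers $\ell\ge1$, $n\ge1$ and erasure probabilities $p_1,\dots,p_\ell\in[0,1)$. Let $\{z_{t,i}\}$ be independent Bernoulli variables with $\mathbb{P}(z_{t,i}=1)=1-p_i$. The rank $\rho_i(t)$ of node $N^{(i)}$ after $t$ steps satisfies $\rho_1(t)=n$, $\rho_i(0)=0$ for $i\ge2$, and $\rho_{i+1}(t)=\rho_{i+1}(t-1)+z_{t,i}\mathbf 1\{\rho_i(t-1)>\rho_{i+1}(t-1)\}$ for $t\ge1$, $1\le i\le\ell$; $\rho_i-\rho_{i+1}$ is the number of innovative packets at node $N^{(i)}$. For $1\le k\le n$ let $\sigma_k:=\min\{t:\rho_2(t)=k\}$ be the time step at which the $k$-th packet arrives at $N^{(2)}$, and let $Y_k:=(R^{(2)}_k,\dots,R^{(\ell)}_k)$ with $R^{(i)}_k:=\rho_i(\sigma_k)-\rho_{i+1}(\sigma_k)$, the numbers of innovative packets at nodes $N^{(2)},\dots,N^{(\ell)}$ at that moment (including packet $k$). *)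

theory Defs
  imports "HOL-Probability.Probability"
begin

text \<open>Ranks in the line network. zz t i is the realisation of z_{t,i}.
  rank n zz t i = rho_i(t) for nodes i = 1..l+1 (node 1 is the source).\<close>
fun rank :: "nat \<Rightarrow> (nat \<Rightarrow> nat \<Rightarrow> bool) \<Rightarrow> nat \<Rightarrow> nat \<Rightarrow> nat" where
  "rank n zz 0 i = (if i = 1 then n else 0)"
| "rank n zz (Suc t) i =
     (if i = 1 then n
      else if i \<ge> 2 then
        rank n zz t i +
        (if zz (Suc t) (i - 1) \<and> rank n zz t (i - 1) > rank n zz t i then 1 else 0)
      else 0)"

definition sigma :: "nat \<Rightarrow> (nat \<Rightarrow> nat \<Rightarrow> bool) \<Rightarrow> nat \<Rightarrow> nat" where
  "sigma n zz k = (LEAST t. rank n zz t 2 = k)"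

text \<open>R^{(i)}_k = rho_i(sigma_k) - rho_{i+1}(sigma_k); Y_k is the vector (R^{(i)}_k) for i = 2..l.\<close>
definition Rk :: "nat \<Rightarrow> (nat \<Rightarrow> nat \<Rightarrow> bool) \<Rightarrow> nat \<Rightarrow> nat \<Rightarrow> nat" where
  "Rk n zz k i = rank n zz (sigma n zz k) i - rank n zz (sigma n zz k) (Suc i)"

definition vec_ge :: "nat \<Rightarrow> (nat \<Rightarrow> nat) \<Rightarrow> (nat \<Rightarrow> nat) \<Rightarrow> bool" where
  "vec_ge l a b \<longleftrightarrow> (\<forall>j\<in>{2..l}. a j \<ge> b j)"

end

theory Submission
  imports Defs
begin

lemma rank_1[simp]: "rank n c t (Suc 0) = n"
  by (cases t) auto

lemma rank_0[simp]: "rank n c t 0 = 0"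
  by (cases t) auto

lemma rank_Suc_Suc:
  "1 \<le> i \<Longrightarrow> rank n c (Suc t) (Suc i) =
     rank n c t (Suc i) + (if c (Suc t) i \<and> rank n c t (Suc i) < rank n c t i then 1 else 0)"
  by simp

lemma rank_init: "rank n c 0 i = (if i = 1 then n else 0)" by simp

declare rank.simps[simp del]

lemma rank_step_mono: "rank n c t i \<le> rank n c (Suc t) i"
  by (cases i; cases "i = 1") (auto simp: rank_Suc_Suc)

lemma rank_mono_t: "t \<le> t' \<Longrightarrow> rank n c t i \<le> rank n c t' i"
  by (induction t' rule: dec_induct) (auto intro: order_trans[OF _ rank_step_mono])

lemma rank_step_le: "rank n c (Suc t) i \<le> Suc (rank n c t i)"
  by (cases i; cases "i = 1") (auto simp: rank_Suc_Suc)

lemma rank_mono_i: "1 \<le> i \<Longrightarrow> rank n c t (Suc i) \<le> rank n c t i"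
proof (induction t arbitrary: i)
  case 0
  then show ?case by (auto simp: rank_init)
next
  case (Suc t)
  have "rank n c t i \<le> rank n c (Suc t) i" by (rule rank_step_mono)
  then show ?case using Suc.IH[OF Suc.prems] Suc.prems by (auto simp: rank_Suc_Suc)
qed

lemma rank_local:
  assumes "\<And>u j. 1 \<le> u \<Longrightarrow> u \<le> T \<Longrightarrow> 1 \<le> j \<Longrightarrow> j \<le> l \<Longrightarrow> c u j = c' u j"
  shows "t \<le> T \<Longrightarrow> i \<le> Suc l \<Longrightarrow> rank n c t i = rank n c' t i"
proof (induction t arbitrary: i)
  case 0
  then show ?case by (simp add: rank_init)
next
  case (Suc t)
  show ?case
  proof (cases "i \<ge> 2")
    case True
    then obtain j where j: "i = Suc j" "1 \<le> j" by (cases i) auto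
    have "c (Suc t) j = c' (Suc t) j" using assms Suc.prems j by auto
    then show ?thesis using Suc j by (simp add: rank_Suc_Suc)
  next
    case False
    then have "i = 0 \<or> i = 1" by auto
    then show ?thesis by auto
  qed
qed



lemma before_s:
  assumes "\<And>u. 1 \<le> u \<Longrightarrow> u < s \<Longrightarrow> \<not> c u 1"
  shows "u < s \<Longrightarrow> 2 \<le> i \<Longrightarrow> rank n c u i = 0"
proof (induction u arbitrary: i)
  case 0 then show ?case by (simp add: rank_init)
next
  case (Suc u)
  then obtain j where j: "i = Suc j" "1 \<le> j" by (cases i) auto
  show ?case
  proof (cases "j = 1")
    case True
    then show ?thesis using Suc assms[of "Suc u"] j by (simp add: rank_Suc_Suc)
  next
    case False
    then show ?thesis using Suc j by (simp add: rank_Suc_Suc)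
  qed
qed

lemma at_s:
  assumes "\<And>u. 1 \<le> u \<Longrightarrow> u < s \<Longrightarrow> \<not> c u 1" "1 \<le> s" "c s 1" "1 \<le> n"
  shows "rank n c s 2 = 1" "3 \<le> i \<Longrightarrow> rank n c s i = 0"
proof -
  obtain u where u: "s = Suc u" using assms(2) by (cases s) auto
  have r2: "rank n c u 2 = 0" using before_s[where s=s and c=c, OF assms(1)] u by auto
  show "rank n c s 2 = 1" using u r2 assms(3,4) rank_Suc_Suc[of 1 n c u] by (simp add: numeral_2_eq_2)
  assume i: "3 \<le> i"
  then obtain j where j: "i = Suc j" "2 \<le> j" by (cases i) auto
  have "rank n c u i = 0" "rank n c u j = 0" using before_s[where s=s and c=c, OF assms(1)] u i j by auto
  then show "rank n c s i = 0" using u j rank_Suc_Suc[of j n c u] by simp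
qed

lemma coupling:
  assumes nc: "\<And>u. 1 \<le> u \<Longrightarrow> u < s \<Longrightarrow> \<not> c u 1" and s: "1 \<le> s" "c s 1" and n: "1 \<le> n"
  defines "c' \<equiv> (\<lambda>t i. c (t + s) i)"
  shows "rank n c' t 2 < n \<Longrightarrow> rank n c (s + t) 2 = Suc (rank n c' t 2) \<and>
     (\<forall>i\<ge>2. rank n c' t i - rank n c' t (Suc i) \<le> rank n c (s + t) i - rank n c (s + t) (Suc i))"
proof (induction t)
  case 0
  have "rank n c s (Suc i) = 0" if "2 \<le> i" for i using at_s(2)[where s=s and c=c, OF nc s n, of "Suc i"] that by auto
  then show ?case using at_s[where s=s and c=c, OF nc s n] by (simp add: rank_init)
next
  case (Suc t)
  have lt: "rank n c' t 2 < n" using rank_step_mono[of n c' t 2] Suc.prems by linarith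
  note IH = Suc.IH[OF lt]
  define A where "A = rank n c (s + t)"
  define B where "B = rank n c' t"
  have cc: "c (Suc (s + t)) j = c' (Suc t) j" for j by (simp add: c'_def add.commute)
  have A2: "A 2 = Suc (B 2)" using IH by (simp add: A_def B_def)
  have monoA: "A (Suc i) \<le> A i" if "1 \<le> i" for i using rank_mono_i[OF that] by (simp add: A_def)
  have monoB: "B (Suc i) \<le> B i" if "1 \<le> i" for i using rank_mono_i[OF that] by (simp add: B_def)
  have QI: "B i - B (Suc i) \<le> A i - A (Suc i)" if "2 \<le> i" for i using IH that by (simp add: A_def B_def)
  have RA: "rank n c (s + Suc t) (Suc i) = A (Suc i) + (if c' (Suc t) i \<and> A (Suc i) < A i then 1 else 0)"
    if "1 \<le> i" for i using rank_Suc_Suc[OF that, of n c "s+t"] cc by (simp add: A_def)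
  have RB: "rank n c' (Suc t) (Suc i) = B (Suc i) + (if c' (Suc t) i \<and> B (Suc i) < B i then 1 else 0)"
    if "1 \<le> i" for i using rank_Suc_Suc[OF that, of n c' t] by (simp add: B_def)
  have A1: "A (Suc 0) = n" "B (Suc 0) = n" "A 1 = n" "B 1 = n" by (simp_all add: A_def B_def)
  have arr: "(c' (Suc t) 1 \<and> A 2 < n) = (c' (Suc t) 1 \<and> B 2 < n)"
    using RB[of 1] Suc.prems A2 by (auto simp: numeral_2_eq_2 A1 split: if_splits)
  have new2: "rank n c (s + Suc t) 2 = Suc (rank n c' (Suc t) 2)"
    using RA[of 1] RB[of 1] arr A2 A1 by (simp add: numeral_2_eq_2)
  have newQ: "rank n c' (Suc t) i - rank n c' (Suc t) (Suc i)
      \<le> rank n c (s + Suc t) i - rank n c (s + Suc t) (Suc i)" if i: "2 \<le> i" for i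
  proof -
    obtain j where j: "i = Suc j" "1 \<le> j" using i by (cases i) auto
    have inc: "(if c' (Suc t) j \<and> B i < B j then 1 else 0) \<le> (if c' (Suc t) j \<and> A i < A j then 1 else (0::nat))"
    proof (cases "j = 1")
      case True then show ?thesis using arr j A1 by (auto simp: numeral_2_eq_2)
    next
      case False
      then have "B j - B i \<le> A j - A i" using QI[of j] j by auto
      then show ?thesis using j by auto
    qed
    have q: "B i - B (Suc i) \<le> A i - A (Suc i)" using QI i by auto
    have m: "A (Suc i) \<le> A i" "B (Suc i) \<le> B i" using monoA monoB i by auto
    show ?thesis using RA[of i] RB[of i] RA[of j] RB[of j] j inc q m
      by (auto split: if_splits)
  qed
  show ?case using new2 newQ by auto
qed



lemma det_main:
  assumes nc: "\<And>u. 1 \<le> u \<Longrightarrow> u < s \<Longrightarrow> \<not> c u 1" and s: "1 \<le> s" "c s 1"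
    and k: "1 \<le> k" "Suc k \<le> n"
    and ex: "\<exists>t. rank n (\<lambda>t i. c (t + s) i) t 2 = k"
    and v: "vec_ge l (Rk n (\<lambda>t i. c (t + s) i) k) w"
  shows "vec_ge l (Rk n c (Suc k)) w"
proof -
  define c' where "c' = (\<lambda>t i. c (t + s) i)"
  have n: "1 \<le> n" using k by auto
  define sg where "sg = sigma n c' k"
  have sgk: "rank n c' sg 2 = k" using ex unfolding sg_def sigma_def c'_def by (rule LeastI_ex)
  have below: "rank n c' t 2 < k" if "t < sg" for t
  proof -
    have "rank n c' t 2 \<le> k" using rank_mono_t[of t sg n c' 2] that sgk by simp
    moreover have "rank n c' t 2 \<noteq> k" using not_less_Least[of t "\<lambda>t. rank n c' t 2 = k"] that
      unfolding sg_def sigma_def by blast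
    ultimately show ?thesis by simp
  qed
  have inv: "rank n c (s + t) 2 = Suc (rank n c' t 2) \<and>
     (\<forall>i\<ge>2. rank n c' t i - rank n c' t (Suc i) \<le> rank n c (s + t) i - rank n c (s + t) (Suc i))"
    if "t \<le> sg" for t
  proof -
    have "rank n c' t 2 \<le> k" using rank_mono_t[of t sg n c' 2] that sgk by simp
    then have "rank n c' t 2 < n" using k by simp
    then show ?thesis using coupling[where c=c and s=s, OF nc s n] unfolding c'_def by blast
  qed
  have sig: "sigma n c (Suc k) = s + sg"
    unfolding sigma_def
  proof (rule Least_equality)
    show "rank n c (s + sg) 2 = Suc k" using inv[of sg] sgk by simp
  next
    fix u assume u: "rank n c u 2 = Suc k"
    show "s + sg \<le> u"
    proof (rule ccontr)
      assume "\<not> s + sg \<le> u"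
      then have lt: "u < s + sg" by simp
      show False
      proof (cases "u < s")
        case True
        then show ?thesis using before_s[where s=s and c=c, OF nc, of u 2] u by simp
      next
        case False
        then obtain t where t: "u = s + t" "t < sg" using lt by (metis add_less_cancel_left le_Suc_ex not_le)
        then show ?thesis using inv[of t] below[of t] u by simp
      qed
    qed
  qed
  show ?thesis
    unfolding vec_ge_def
  proof
    fix j assume j: "j \<in> {2..l}"
    have "w j \<le> Rk n c' k j" using v j unfolding vec_ge_def c'_def by blast
    also have "\<dots> \<le> Rk n c (Suc k) j" using inv[of sg] j unfolding Rk_def sig sg_def by auto
    finally show "w j \<le> Rk n c (Suc k) j" .
  qed
qed

lemma sigma_local:
  assumes loc: "\<And>u j. 1 \<le> u \<Longrightarrow> u \<le> T \<Longrightarrow> 1 \<le> j \<Longrightarrow> j \<le> l \<Longrightarrow> c u j = c' u j"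
    and l: "1 \<le> l" and ex: "\<exists>t\<le>T. rank n c t 2 = k"
  shows "sigma n c k = sigma n c' k" "sigma n c k \<le> T"
    "i \<le> l \<Longrightarrow> Rk n c k i = Rk n c' k i"
proof -
  have eq: "rank n c t 2 = rank n c' t 2" if "t \<le> T" for t
    using rank_local[where c=c and c'=c' and T=T and l=l, OF loc, of t 2] that l by auto
  obtain t0 where t0: "t0 \<le> T" "rank n c t0 2 = k" using ex by blast
  have le: "sigma n c k \<le> t0" unfolding sigma_def using t0 by (intro Least_le) simp
  then show le': "sigma n c k \<le> T" using t0 by simp
  have P: "rank n c (sigma n c k) 2 = k" unfolding sigma_def using t0 by (intro LeastI) simp
  show S: "sigma n c k = sigma n c' k"
    unfolding sigma_def[of n c' k]
  proof (rule Least_equality[symmetric])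
    show "rank n c' (sigma n c k) 2 = k" using P eq le' by simp
  next
    fix y assume y: "rank n c' y 2 = k"
    show "sigma n c k \<le> y"
    proof (cases "y \<le> T")
      case True then show ?thesis unfolding sigma_def using y eq[OF True] by (intro Least_le) simp
    next
      case False then show ?thesis using le' by simp
    qed
  qed
  assume i: "i \<le> l"
  show "Rk n c k i = Rk n c' k i"
    unfolding Rk_def S[symmetric]
    using rank_local[where c=c and c'=c' and T=T and l=l, OF loc, of "sigma n c k"] le' i by simp
qed



locale line_net = prob_space M for M :: "'a measure" +
  fixes l n :: nat and p :: "nat \<Rightarrow> real" and z :: "nat \<Rightarrow> nat \<Rightarrow> 'a \<Rightarrow> bool"
  assumes l2: "l \<ge> 2" and n1: "n \<ge> 1" and pp: "\<And>i. i \<in> {1..l} \<Longrightarrow> 0 \<le> p i \<and> p i < 1"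
  and ind: "indep_vars (\<lambda>_. count_space UNIV) (\<lambda>(t, i). z t i) {(t, i). t \<ge> 1 \<and> i \<in> {1..l}}"
  and marg: "\<And>t i. t \<ge> 1 \<Longrightarrow> i \<in> {1..l} \<Longrightarrow> prob {x \<in> space M. z t i x} = 1 - p i"
begin

definition II where "II = {(t, i). t \<ge> (1::nat) \<and> i \<in> {1..l}}"

definition q :: "nat \<Rightarrow> bool \<Rightarrow> real" where "q i b = (if b then 1 - p i else p i)"

lemma meas_z: "t \<ge> 1 \<Longrightarrow> i \<in> {1..l} \<Longrightarrow> z t i \<in> measurable M (count_space UNIV)"
  using ind unfolding indep_vars_def by (auto dest!: bspec[where x="(t,i)"])

lemma sets_z: "t \<ge> 1 \<Longrightarrow> i \<in> {1..l} \<Longrightarrow> {x \<in> space M. z t i x = b} \<in> events"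
  using measurable_sets[OF meas_z, of t i "{b}"] by (simp add: vimage_def Int_def conj_commute)

lemma prob_single: "t \<ge> 1 \<Longrightarrow> i \<in> {1..l} \<Longrightarrow> prob {x \<in> space M. z t i x = b} = q i b"
proof (cases b)
  case True
  then show ?thesis if "t \<ge> 1" "i \<in> {1..l}" using marg[OF that] by (simp add: q_def)
next
  case False
  assume ti: "t \<ge> 1" "i \<in> {1..l}"
  have "{x \<in> space M. z t i x = False} = space M - {x \<in> space M. z t i x = True}" by auto
  then have "prob {x \<in> space M. z t i x = b} = 1 - prob {x \<in> space M. z t i x = True}"
    using False prob_compl[OF sets_z[OF ti, of True]] by simp
  then show ?thesis using marg[OF ti] False by (simp add: q_def)
qed

lemma L1:
  assumes J: "finite J" "inj_on h J" "h ` J \<subseteq> II"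
  shows "prob {x \<in> space M. \<forall>j\<in>J. z (fst (h j)) (snd (h j)) x = f j} = (\<Prod>j\<in>J. q (snd (h j)) (f j))"
proof (cases "J = {}")
  case True
  then show ?thesis by (simp add: prob_space)
next
  case False
  define A where "A = (\<lambda>j'. {f (the_inv_into J h j')})"
  define X where "X = (\<lambda>(t::nat, i::nat). z t i)"
  have Xh: "X (h j) = z (fst (h j)) (snd (h j))" for j by (simp add: X_def case_prod_beta)
  have Ah: "A (h j) = {f j}" if "j \<in> J" for j using J(2) that by (simp add: A_def the_inv_into_f_f)
  have "prob (\<Inter>j'\<in>h ` J. X j' -` A j' \<inter> space M) = (\<Prod>j'\<in>h ` J. prob (X j' -` A j' \<inter> space M))"
    using J False unfolding X_def by (intro indep_varsD[OF ind]) (auto simp: II_def)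
  moreover have "(\<Inter>j'\<in>h ` J. X j' -` A j' \<inter> space M) = (\<Inter>j\<in>J. X (h j) -` A (h j) \<inter> space M)"
    by simp
  moreover have "(\<Inter>j\<in>J. X (h j) -` A (h j) \<inter> space M) = {x \<in> space M. \<forall>j\<in>J. z (fst (h j)) (snd (h j)) x = f j}"
    using False by (auto simp: Xh Ah)
  moreover have "(\<Prod>j'\<in>h ` J. prob (X j' -` A j' \<inter> space M)) = (\<Prod>j\<in>J. prob (X (h j) -` A (h j) \<inter> space M))"
    using J(2) by (rule prod.reindex[unfolded comp_def])
  moreover have "prob (X (h j) -` A (h j) \<inter> space M) = q (snd (h j)) (f j)" if "j \<in> J" for j
  proof -
    have "X (h j) -` A (h j) \<inter> space M = {x \<in> space M. z (fst (h j)) (snd (h j)) x = f j}"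
      using that by (auto simp: Xh Ah)
    moreover have "fst (h j) \<ge> 1" "snd (h j) \<in> {1..l}" using J(3) that by (auto simp: II_def)
    ultimately show ?thesis using prob_single by simp
  qed
  ultimately show ?thesis by simp
qed

end


context line_net
begin

definition J0 :: "nat \<Rightarrow> (nat \<times> nat) set" where "J0 T = {1..T} \<times> {1..l}"
definition ext :: "nat \<Rightarrow> (nat \<times> nat \<Rightarrow> bool) \<Rightarrow> nat \<Rightarrow> nat \<Rightarrow> bool"
  where "ext T f = (\<lambda>t i. if (t, i) \<in> J0 T then f (t, i) else False)"
definition loc :: "nat \<Rightarrow> ((nat \<Rightarrow> nat \<Rightarrow> bool) \<Rightarrow> bool) \<Rightarrow> bool" where
  "loc T F = (\<forall>c c'. (\<forall>u j. 1 \<le> u \<longrightarrow> u \<le> T \<longrightarrow> 1 \<le> j \<longrightarrow> j \<le> l \<longrightarrow> c u j = c' u j) \<longrightarrow> F c = F c')"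
definition C :: "nat \<Rightarrow> nat \<Rightarrow> (nat \<times> nat \<Rightarrow> bool) \<Rightarrow> 'a set" where
  "C T s f = {x \<in> space M. \<forall>j\<in>J0 T. z (fst j + s) (snd j) x = f j}"
definition SS :: "nat \<Rightarrow> ((nat \<Rightarrow> nat \<Rightarrow> bool) \<Rightarrow> bool) \<Rightarrow> (nat \<times> nat \<Rightarrow> bool) set" where
  "SS T F = {f \<in> J0 T \<rightarrow>\<^sub>E UNIV. F (ext T f)}"

lemma finite_J0: "finite (J0 T)" by (simp add: J0_def)

lemma finite_SS: "finite (SS T F)"
proof -
  have "SS T F \<subseteq> J0 T \<rightarrow>\<^sub>E (UNIV :: bool set)" by (auto simp: SS_def)
  moreover have "finite (J0 T \<rightarrow>\<^sub>E (UNIV :: bool set))" by (intro finite_PiE finite_J0) auto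
  ultimately show ?thesis by (rule finite_subset)
qed

lemma locD: "loc T F \<Longrightarrow> (\<And>u j. 1 \<le> u \<Longrightarrow> u \<le> T \<Longrightarrow> 1 \<le> j \<Longrightarrow> j \<le> l \<Longrightarrow> c u j = c' u j) \<Longrightarrow> F c = F c'"
  unfolding loc_def by blast

lemma ev_union:
  assumes "loc T F"
  shows "{x \<in> space M. F (\<lambda>t i. z (t + s) i x)} = (\<Union>f\<in>SS T F. C T s f)"
proof safe
  fix x assume x: "x \<in> space M" "F (\<lambda>t i. z (t + s) i x)"
  define f where "f = restrict (\<lambda>j. z (fst j + s) (snd j) x) (J0 T)"
  have "F (ext T f) = F (\<lambda>t i. z (t + s) i x)"
    by (rule locD[OF assms]) (auto simp: ext_def f_def J0_def)
  then have "f \<in> SS T F" using x by (auto simp: SS_def f_def)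
  moreover have "x \<in> C T s f" using x by (auto simp: C_def f_def)
  ultimately show "x \<in> (\<Union>f\<in>SS T F. C T s f)" by blast
next
  fix x f assume f: "f \<in> SS T F" and x: "x \<in> C T s f"
  show "x \<in> space M" using x by (simp add: C_def)
  have "F (ext T f) = F (\<lambda>t i. z (t + s) i x)"
    using x unfolding C_def by (intro locD[OF assms]) (auto simp: ext_def J0_def)
  then show "F (\<lambda>t i. z (t + s) i x)" using f by (simp add: SS_def)
qed

lemma C_sets: "C T s f \<in> events"
  unfolding C_def
proof (rule sets.sets_Collect_finite_All)
  fix j assume "j \<in> J0 T"
  then show "{x \<in> space M. z (fst j + s) (snd j) x = f j} \<in> events"
    by (intro sets_z) (auto simp: J0_def)
qed (rule finite_J0)

lemma C_disj: "disjoint_family_on (C T s) (SS T F)"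
  unfolding disjoint_family_on_def
proof (intro ballI impI)
  fix f g assume f: "f \<in> SS T F" and g: "g \<in> SS T F" and ne: "f \<noteq> g"
  show "C T s f \<inter> C T s g = {}"
  proof (rule ccontr)
    assume "C T s f \<inter> C T s g \<noteq> {}"
    then obtain x where x: "x \<in> C T s f" "x \<in> C T s g" by blast
    have "f j = g j" if "j \<in> J0 T" for j
    proof -
      have "z (fst j + s) (snd j) x = f j" "z (fst j + s) (snd j) x = g j"
        using x that unfolding C_def by auto
      then show ?thesis by (metis (no_types))
    qed
    moreover have "f j = g j" if "j \<notin> J0 T" for j
    proof -
      have "f \<in> extensional (J0 T)" "g \<in> extensional (J0 T)" using f g by (auto simp: SS_def PiE_def)
      then show ?thesis using extensional_arb[of f "J0 T" j] extensional_arb[of g "J0 T" j] that by simp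
    qed
    ultimately have "f = g" by (intro ext) (metis (no_types))
    then show False using ne by simp
  qed
qed

lemma C_prob: "prob (C T s f) = (\<Prod>j\<in>J0 T. q (snd j) (f j))"
proof -
  have "prob {x \<in> space M. \<forall>j\<in>J0 T. z (fst ((\<lambda>j. (fst j + s, snd j)) j)) (snd ((\<lambda>j. (fst j + s, snd j)) j)) x = f j}
    = (\<Prod>j\<in>J0 T. q (snd ((\<lambda>j. (fst j + s, snd j)) j)) (f j))"
    by (rule L1) (auto simp: finite_J0 inj_on_def J0_def II_def prod_eq_iff)
  then show ?thesis by (simp add: C_def)
qed

lemma ev_sets: "loc T F \<Longrightarrow> {x \<in> space M. F (\<lambda>t i. z (t + s) i x)} \<in> events"
  unfolding ev_union by (intro sets.finite_UN finite_SS C_sets)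

lemma ev_prob: "loc T F \<Longrightarrow> prob {x \<in> space M. F (\<lambda>t i. z (t + s) i x)} = (\<Sum>f\<in>SS T F. \<Prod>j\<in>J0 T. q (snd j) (f j))"
  unfolding ev_union
  by (subst measure_finite_Union) (auto simp: finite_SS C_sets C_disj C_prob emeasure_eq_measure)

lemma ev_sets0: "loc T F \<Longrightarrow> {x \<in> space M. F (\<lambda>t i. z t i x)} \<in> events"
  using ev_sets[of T F 0] by simp

lemma ev_prob_shift: "loc T F \<Longrightarrow> prob {x \<in> space M. F (\<lambda>t i. z (t + s) i x)} = prob {x \<in> space M. F (\<lambda>t i. z t i x)}"
  using ev_prob[of T F s] ev_prob[of T F 0] by simp

end


lemma reach_stay:
  assumes "rank n c t 2 = k" "k < n" "\<And>v. t < v \<Longrightarrow> v \<le> t + d \<Longrightarrow> \<not> c v 1"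
  shows "rank n c (t + d) 2 = k"
  using assms(3)
proof (induction d)
  case 0 then show ?case using assms(1) by simp
next
  case (Suc d)
  have r: "rank n c (t + d) 2 = k" using Suc by simp
  have "\<not> c (Suc (t + d)) 1" using Suc.prems[of "Suc (t + d)"] by simp
  then show ?case using r rank_Suc_Suc[of 1 n c "t + d"] by (simp add: numeral_2_eq_2)
qed

lemma reach:
  assumes inf: "\<forall>m. \<exists>t>m. c t 1" and "k \<le> n"
  shows "\<exists>t. rank n c t 2 = k"
  using assms(2)
proof (induction k)
  case 0 then show ?case by (intro exI[of _ 0]) (simp add: rank_init)
next
  case (Suc k)
  then obtain t where t: "rank n c t 2 = k" by auto
  have kn: "k < n" using Suc by simp
  define u where "u = (LEAST u. t < u \<and> c u 1)"
  have ex: "\<exists>u. t < u \<and> c u 1" using inf by blast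
  have u: "t < u" "c u 1" using LeastI_ex[OF ex] unfolding u_def by auto
  have nu: "\<not> c v 1" if "t < v" "v < u" for v using not_less_Least[of v "\<lambda>u. t < u \<and> c u 1"] that
    unfolding u_def by blast
  obtain d where d: "u = Suc (t + d)" using u(1) by (metis less_iff_Suc_add)
  have "rank n c (t + d) 2 = k" using reach_stay[OF t kn, of d] nu d by simp
  then have "rank n c u 2 = Suc k" using d u(2) kn rank_Suc_Suc[of 1 n c "t + d"] by (simp add: numeral_2_eq_2)
  then show ?case by blast
qed

context line_net
begin

lemma l1: "1 \<le> l" using l2 by simp

lemma loc_vec: "loc t (\<lambda>c. vec_ge l (\<lambda>i. rank n c t i - rank n c t (Suc i)) w)"
  unfolding loc_def
proof (intro allI impI)
  fix c c' :: "nat \<Rightarrow> nat \<Rightarrow> bool"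
  assume h: "\<forall>u j. 1 \<le> u \<longrightarrow> u \<le> t \<longrightarrow> 1 \<le> j \<longrightarrow> j \<le> l \<longrightarrow> c u j = c' u j"
  have "rank n c t i = rank n c' t i" if "i \<le> Suc l" for i
    using rank_local[where c=c and c'=c' and T=t and l=l, of t i] h that by blast
  then show "vec_ge l (\<lambda>i. rank n c t i - rank n c t (Suc i)) w = vec_ge l (\<lambda>i. rank n c' t i - rank n c' t (Suc i)) w"
    unfolding vec_ge_def by auto
qed

lemma loc_rank: "i \<le> Suc l \<Longrightarrow> loc t (\<lambda>c. rank n c t i = v)"
  unfolding loc_def
proof (intro allI impI)
  fix c c' :: "nat \<Rightarrow> nat \<Rightarrow> bool"
  assume h: "\<forall>u j. 1 \<le> u \<longrightarrow> u \<le> t \<longrightarrow> 1 \<le> j \<longrightarrow> j \<le> l \<longrightarrow> c u j = c' u j" and i: "i \<le> Suc l"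
  have "rank n c t i = rank n c' t i"
    using rank_local[where c=c and c'=c' and T=t and l=l, of t i] h i by blast
  then show "(rank n c t i = v) = (rank n c' t i = v)" by simp
qed

definition gg :: "nat \<Rightarrow> nat \<Rightarrow> (nat \<Rightarrow> nat) \<Rightarrow> (nat \<Rightarrow> nat \<Rightarrow> bool) \<Rightarrow> bool" where
  "gg k T w c = ((\<exists>t\<le>T. rank n c t 2 = k) \<and> vec_ge l (Rk n c k) w)"

lemma loc_gg: "loc T (gg k T w)"
  unfolding loc_def
proof (intro allI impI)
  fix c c' :: "nat \<Rightarrow> nat \<Rightarrow> bool"
  assume h: "\<forall>u j. 1 \<le> u \<longrightarrow> u \<le> T \<longrightarrow> 1 \<le> j \<longrightarrow> j \<le> l \<longrightarrow> c u j = c' u j"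
  have h': "\<And>u j. 1 \<le> u \<Longrightarrow> u \<le> T \<Longrightarrow> 1 \<le> j \<Longrightarrow> j \<le> l \<Longrightarrow> c u j = c' u j" using h by blast
  have h'': "\<And>u j. 1 \<le> u \<Longrightarrow> u \<le> T \<Longrightarrow> 1 \<le> j \<Longrightarrow> j \<le> l \<Longrightarrow> c' u j = c u j" using h by metis
  have eqr: "rank n c t 2 = rank n c' t 2" if "t \<le> T" for t
    using rank_local[where c=c and c'=c' and T=T and l=l, OF h', of t 2] that l1 by simp
  show "gg k T w c = gg k T w c'"
  proof (cases "\<exists>t\<le>T. rank n c t 2 = k")
    case True
    then have True': "\<exists>t\<le>T. rank n c' t 2 = k" using eqr by auto
    have "Rk n c k i = Rk n c' k i" if "i \<le> l" for i using sigma_local(3)[OF h' l1 True that] .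
    then show ?thesis unfolding gg_def vec_ge_def using True True' by auto
  next
    case False
    then have "\<not> (\<exists>t\<le>T. rank n c' t 2 = k)" using eqr by auto
    then show ?thesis unfolding gg_def using False by auto
  qed
qed

definition E :: "nat \<Rightarrow> (nat \<Rightarrow> nat) \<Rightarrow> 'a set" where
  "E k w = {x \<in> space M. vec_ge l (Rk n (\<lambda>t i. z t i x) k) w}"

lemma E_sets: "E k w \<in> events"
proof -
  have p1: "Measurable.pred M (\<lambda>x. rank n (\<lambda>t i. z t i x) t 2 = k)" for t
    unfolding Measurable.pred_def using ev_sets0[OF loc_rank, of 2 t k] l1 by simp
  have sg: "(\<lambda>x. sigma n (\<lambda>t i. z t i x) k) \<in> measurable M (count_space UNIV)"
    unfolding sigma_def by (rule measurable_Least) (rule p1)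
  have p2: "Measurable.pred M (\<lambda>x. vec_ge l (\<lambda>i. rank n (\<lambda>t i. z t i x) t i - rank n (\<lambda>t i. z t i x) t (Suc i)) w)" for t
    unfolding Measurable.pred_def using ev_sets0[OF loc_vec, of t w] by simp
  have "Measurable.pred M (\<lambda>x. (\<lambda>t x. vec_ge l (\<lambda>i. rank n (\<lambda>t i. z t i x) t i - rank n (\<lambda>t i. z t i x) t (Suc i)) w)
      (sigma n (\<lambda>t i. z t i x) k) x)"
    using p2 sg by (rule measurable_compose_countable[where f="\<lambda>t x. vec_ge l (\<lambda>i. rank n (\<lambda>t i. z t i x) t i - rank n (\<lambda>t i. z t i x) t (Suc i)) w"])
  then show ?thesis unfolding Measurable.pred_def E_def Rk_def by simp
qed

end


context line_net
begin

definition N0 :: "nat \<Rightarrow> 'a set" where "N0 m = {x \<in> space M. \<forall>t. \<not> z (Suc (m + t)) 1 x}"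

lemma sets_z_not: "a \<ge> 1 \<Longrightarrow> {x \<in> space M. \<not> z a 1 x} \<in> events"
  using sets_z[of a 1 False] l1 by simp

lemma N0_sets: "N0 m \<in> events"
  unfolding N0_def by (rule sets.sets_Collect_countable_All) (rule sets_z_not, simp)

definition BB :: "nat \<Rightarrow> nat \<Rightarrow> 'a set" where
  "BB m N = {x \<in> space M. \<forall>j\<in>{Suc m..m + N} \<times> {1}. z (fst (id j)) (snd (id j)) x = (\<lambda>_. False) j}"

lemma BB_sets: "BB m N \<in> events"
  unfolding BB_def
proof (rule sets.sets_Collect_finite_All)
  fix j :: "nat \<times> nat" assume "j \<in> {Suc m..m + N} \<times> {1}"
  then show "{x \<in> space M. z (fst (id j)) (snd (id j)) x = (\<lambda>_. False) j} \<in> events"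
    using l1 by (intro sets_z) auto
qed simp

lemma BB_prob: "prob (BB m N) = p 1 ^ N"
proof -
  have "prob (BB m N) = (\<Prod>j\<in>{Suc m..m + N} \<times> {1}. q (snd (id j)) ((\<lambda>_. False) j))"
    unfolding BB_def using l1 by (intro L1) (auto simp: II_def)
  also have "\<dots> = (\<Prod>j\<in>{Suc m..m + N} \<times> {1::nat}. p 1)" by (intro prod.cong) (auto simp: q_def)
  also have "\<dots> = p 1 ^ N" by (simp add: card_cartesian_product)
  finally show ?thesis .
qed

lemma N0_prob: "prob (N0 m) = 0"
proof -
  have le: "prob (N0 m) \<le> p 1 ^ N" for N
  proof -
    have "N0 m \<subseteq> BB m N"
    proof
      fix x assume x: "x \<in> N0 m"
      have "\<not> z t 1 x" if "Suc m \<le> t" for t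
        using x that unfolding N0_def by (auto dest!: spec[where x="t - Suc m"])
      then show "x \<in> BB m N" using x unfolding BB_def N0_def by auto
    qed
    then show ?thesis using finite_measure_mono[OF _ BB_sets] BB_prob by metis
  qed
  have p1: "0 \<le> p 1" "p 1 < 1" using pp[of 1] l1 by auto
  have "(\<lambda>N. p 1 ^ N) \<longlonglongrightarrow> 0" using p1 by (intro LIMSEQ_power_zero) simp
  then have "prob (N0 m) \<le> 0" by (rule LIMSEQ_le_const) (use le in blast)
  then show ?thesis using measure_nonneg[of M "N0 m"] by linarith
qed

definition Bad :: "'a set" where "Bad = (\<Union>m. N0 m)"

lemma Bad_null: "Bad \<in> null_sets M"
  unfolding Bad_def
proof (rule null_sets_UN)
  fix m show "N0 m \<in> null_sets M"
    using N0_sets N0_prob by (intro null_setsI) (simp_all add: emeasure_eq_measure)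
qed

lemma good: "x \<in> space M \<Longrightarrow> x \<notin> Bad \<Longrightarrow> \<forall>m. \<exists>t>m. z t 1 x"
proof (intro allI)
  fix m assume "x \<in> space M" "x \<notin> Bad"
  then have "x \<notin> N0 m" unfolding Bad_def by blast
  then obtain t where "z (Suc (m + t)) 1 x" using \<open>x \<in> space M\<close> unfolding N0_def by blast
  then show "\<exists>t>m. z t 1 x" by (intro exI[of _ "Suc (m + t)"]) simp
qed

definition A :: "nat \<Rightarrow> 'a set" where
  "A s = {x \<in> space M. 1 \<le> s \<and> (\<forall>j\<in>{1..s} \<times> {1}. z (fst (id j)) (snd (id j)) x = (\<lambda>j. fst j = s) j)}"

lemma A_char: "x \<in> A s \<longleftrightarrow> x \<in> space M \<and> 1 \<le> s \<and> z s 1 x \<and> (\<forall>u. 1 \<le> u \<and> u < s \<longrightarrow> \<not> z u 1 x)"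
  unfolding A_def by (auto; force)

lemma A_sets: "A s \<in> events"
proof (cases "1 \<le> s")
  case True
  have "{x \<in> space M. \<forall>j\<in>{1..s} \<times> {1}. z (fst (id j)) (snd (id j)) x = (\<lambda>j. fst j = s) j} \<in> events"
  proof (rule sets.sets_Collect_finite_All)
    fix j :: "nat \<times> nat" assume "j \<in> {1..s} \<times> {1}"
    then show "{x \<in> space M. z (fst (id j)) (snd (id j)) x = (\<lambda>j. fst j = s) j} \<in> events"
      using l1 by (intro sets_z) auto
  qed simp
  then show ?thesis using True unfolding A_def by simp
next
  case False
  then show ?thesis unfolding A_def by simp
qed

lemma A_prob: "1 \<le> s \<Longrightarrow> prob (A s) = (\<Prod>j\<in>{1..s} \<times> {1}. q (snd (id j)) ((\<lambda>j. fst j = s) j))"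
proof -
  assume s: "1 \<le> s"
  have "A s = {x \<in> space M. \<forall>j\<in>{1..s} \<times> {1}. z (fst (id j)) (snd (id j)) x = (\<lambda>j. fst j = s) j}"
    using s unfolding A_def by blast
  also have "prob \<dots> = (\<Prod>j\<in>{1..s} \<times> {1}. q (snd (id j)) ((\<lambda>j. fst j = s) j))"
    using l1 by (intro L1) (auto simp: II_def)
  finally show ?thesis .
qed

lemma A_disj: "disjoint_family A"
  unfolding disjoint_family_on_def
proof (intro ballI impI)
  fix s s' :: nat assume ne: "s \<noteq> s'"
  show "A s \<inter> A s' = {}"
  proof (rule ccontr)
    assume "A s \<inter> A s' \<noteq> {}"
    then obtain x where "x \<in> A s" "x \<in> A s'" by blast
    then show False using ne unfolding A_char by (metis linorder_neqE_nat)
  qed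
qed

lemma A_Union: "(\<Union>s. A s) = space M - N0 0"
proof
  show "(\<Union>s. A s) \<subseteq> space M - N0 0"
  proof
    fix x assume "x \<in> (\<Union>s. A s)"
    then obtain s where "x \<in> A s" by blast
    then have x: "x \<in> space M" "1 \<le> s" "z s 1 x" unfolding A_char by auto
    then have "z (Suc (0 + (s - 1))) 1 x" by simp
    then show "x \<in> space M - N0 0" using x unfolding N0_def by blast
  qed
next
  show "space M - N0 0 \<subseteq> (\<Union>s. A s)"
  proof
    fix x assume x: "x \<in> space M - N0 0"
    then have ex: "\<exists>s. 1 \<le> s \<and> z s 1 x" unfolding N0_def by auto
    define s where "s = (LEAST s. 1 \<le> s \<and> z s 1 x)"
    have s: "1 \<le> s" "z s 1 x" using LeastI_ex[OF ex] unfolding s_def by auto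
    have "\<not> z u 1 x" if "1 \<le> u" "u < s" for u using not_less_Least[of u "\<lambda>s. 1 \<le> s \<and> z s 1 x"] that
      unfolding s_def by blast
    then have "x \<in> A s" using s x unfolding A_char by auto
    then show "x \<in> (\<Union>s. A s)" by blast
  qed
qed

lemma A_prob_sums: "(\<lambda>s. prob (A s)) sums 1"
proof -
  have "(\<lambda>s. prob (A s)) sums prob (\<Union>s. A s)"
    using A_sets A_disj by (intro measure_UNION) (auto simp: emeasure_eq_measure)
  moreover have "prob (\<Union>s. A s) = 1"
    unfolding A_Union using prob_compl[OF N0_sets, of 0] N0_prob by simp
  ultimately show ?thesis by simp
qed

end


context line_net
begin

lemma ball_Plus: "(\<forall>j\<in>X <+> Y. P j) \<longleftrightarrow> (\<forall>a\<in>X. P (Inl a)) \<and> (\<forall>b\<in>Y. P (Inr b))"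
  by (auto simp: Plus_def)

lemma A_C_prob:
  assumes s: "1 \<le> s"
  shows "prob (A s \<inter> C T s f) = prob (A s) * prob (C T s f)"
proof -
  define J1 where "J1 = {1..s} \<times> {1::nat}"
  define H where "H = case_sum (id :: nat \<times> nat \<Rightarrow> nat \<times> nat) (\<lambda>j. (fst j + s, snd j))"
  define FF where "FF = case_sum (\<lambda>j::nat \<times> nat. fst j = s) f"
  have eq: "A s \<inter> C T s f = {x \<in> space M. \<forall>j\<in>J1 <+> J0 T. z (fst (H j)) (snd (H j)) x = FF j}"
    using s unfolding A_def C_def J1_def H_def FF_def ball_Plus by auto
  have fin: "finite (J1 <+> J0 T)" by (simp add: J1_def finite_J0)
  have inj: "inj_on H (J1 <+> J0 T)"
    unfolding inj_on_def H_def J1_def J0_def by (auto simp: prod_eq_iff)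
  have sub: "H ` (J1 <+> J0 T) \<subseteq> II"
    using l1 unfolding H_def J1_def J0_def II_def by auto
  have "prob (A s \<inter> C T s f) = (\<Prod>j\<in>J1 <+> J0 T. q (snd (H j)) (FF j))"
    unfolding eq by (rule L1[OF fin inj sub])
  also have "\<dots> = (\<Prod>j\<in>J1. q (snd j) (fst j = s)) * (\<Prod>j\<in>J0 T. q (snd j) (f j))"
    by (subst prod.Plus) (auto simp: J1_def finite_J0 H_def FF_def)
  also have "\<dots> = prob (A s) * prob (C T s f)"
    using A_prob[OF s] C_prob by (simp add: J1_def)
  finally show ?thesis .
qed

lemma A_G_prob:
  assumes F: "loc T F"
  shows "prob (A s \<inter> {x \<in> space M. F (\<lambda>t i. z (t + s) i x)}) = prob (A s) * prob {x \<in> space M. F (\<lambda>t i. z (t + s) i x)}"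
proof (cases "1 \<le> s")
  case False
  then have "A s = {}" unfolding A_def by auto
  then show ?thesis by simp
next
  case True
  have "A s \<inter> {x \<in> space M. F (\<lambda>t i. z (t + s) i x)} = (\<Union>f\<in>SS T F. A s \<inter> C T s f)"
    unfolding ev_union[OF F] by blast
  then have "prob (A s \<inter> {x \<in> space M. F (\<lambda>t i. z (t + s) i x)}) = (\<Sum>f\<in>SS T F. prob (A s \<inter> C T s f))"
  proof (simp only:)
    have dj: "disjoint_family_on (\<lambda>f. A s \<inter> C T s f) (SS T F)"
      using C_disj[of T s F] unfolding disjoint_family_on_def by blast
    show "prob (\<Union>f\<in>SS T F. A s \<inter> C T s f) = (\<Sum>f\<in>SS T F. prob (A s \<inter> C T s f))"
      using dj A_sets C_sets finite_SS by (intro measure_finite_Union) (auto simp: emeasure_eq_measure)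
  qed
  also have "\<dots> = (\<Sum>f\<in>SS T F. prob (A s) * (\<Prod>j\<in>J0 T. q (snd j) (f j)))"
    using A_C_prob[OF True] C_prob by simp
  also have "\<dots> = prob (A s) * prob {x \<in> space M. F (\<lambda>t i. z (t + s) i x)}"
    using ev_prob[OF F, of s] by (simp add: sum_distrib_left)
  finally show ?thesis .
qed

lemma gg_mono: "gg k T w c \<Longrightarrow> gg k (Suc T) w c"
  unfolding gg_def using le_SucI by blast

lemma step:
  assumes k: "1 \<le> k" "Suc k \<le> n"
  shows "prob (E k w) \<le> prob (E (Suc k) w)"
proof -
  define G where "G T = {x \<in> space M. gg k T w (\<lambda>t i. z t i x)}" for T
  define E' where "E' = E (Suc k) w"
  have E'_sets: "E' \<in> events" unfolding E'_def by (rule E_sets)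
  have G_sets: "G T \<in> events" for T unfolding G_def by (rule ev_sets0[OF loc_gg])
  have G_le: "prob (G T) \<le> prob E'" for T
  proof -
    have tm: "prob (A s) * prob (G T) \<le> prob (A s \<inter> E')" for s
    proof -
      have "prob (A s) * prob (G T) = prob (A s) * prob {x \<in> space M. gg k T w (\<lambda>t i. z (t + s) i x)}"
        unfolding G_def using ev_prob_shift[OF loc_gg[where T=T and k=k and w=w], where s=s] by simp
      also have "\<dots> = prob (A s \<inter> {x \<in> space M. gg k T w (\<lambda>t i. z (t + s) i x)})"
        using A_G_prob[OF loc_gg] by simp
      also have "\<dots> \<le> prob (A s \<inter> E')"
      proof (rule finite_measure_mono)
        show "A s \<inter> E' \<in> events" using A_sets E'_sets by blast
        show "A s \<inter> {x \<in> space M. gg k T w (\<lambda>t i. z (t + s) i x)} \<subseteq> A s \<inter> E'"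
        proof
          fix x assume x: "x \<in> A s \<inter> {x \<in> space M. gg k T w (\<lambda>t i. z (t + s) i x)}"
          have xa: "x \<in> A s" using x by blast
          have a: "x \<in> space M" "1 \<le> s" "z s 1 x" "\<And>u. 1 \<le> u \<Longrightarrow> u < s \<Longrightarrow> \<not> z u 1 x"
            using A_char[THEN iffD1, OF xa] by auto
          have g: "\<exists>t. rank n (\<lambda>t i. z (t + s) i x) t 2 = k" "vec_ge l (Rk n (\<lambda>t i. z (t + s) i x) k) w"
            using x unfolding gg_def by auto
          have "vec_ge l (Rk n (\<lambda>t i. z t i x) (Suc k)) w"
            using det_main[where c="\<lambda>t i. z t i x" and s=s, OF a(4) a(2) a(3) k g] by simp
          then show "x \<in> A s \<inter> E'" using x a unfolding E'_def E_def by auto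
        qed
      qed
      finally show ?thesis .
    qed
    have s1: "(\<lambda>s. prob (A s) * prob (G T)) sums (1 * prob (G T))"
      by (rule sums_mult2[OF A_prob_sums])
    have dj: "disjoint_family (\<lambda>s. A s \<inter> E')"
      using A_disj unfolding disjoint_family_on_def by blast
    have s2: "(\<lambda>s. prob (A s \<inter> E')) sums prob (\<Union>s. A s \<inter> E')"
      using dj A_sets E'_sets by (intro measure_UNION) (auto simp: emeasure_eq_measure)
    have "prob (G T) \<le> prob (\<Union>s. A s \<inter> E')" using sums_le[OF tm s1 s2] by simp
    also have "\<dots> \<le> prob E'" using E'_sets by (intro finite_measure_mono) auto
    finally show ?thesis .
  qed
  have sub: "E k w \<subseteq> (\<Union>T. G T) \<union> Bad"
  proof
    fix x assume x: "x \<in> E k w"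
    show "x \<in> (\<Union>T. G T) \<union> Bad"
    proof (cases "x \<in> Bad")
      case False
      have xs: "x \<in> space M" using x unfolding E_def by auto
      obtain t where t: "rank n (\<lambda>t i. z t i x) t 2 = k" using reach[where c="\<lambda>t i. z t i x" and n=n and k=k, OF good[OF xs False]] k by auto
      have "x \<in> G t" using t x unfolding G_def gg_def E_def by auto
      then show ?thesis by blast
    qed simp
  qed
  have UG: "(\<Union>T. G T) \<in> events" using G_sets by blast
  have "prob (E k w) \<le> prob ((\<Union>T. G T) \<union> Bad)"
    using sub UG Bad_null by (intro finite_measure_mono) auto
  also have "\<dots> = prob (\<Union>T. G T)" using UG Bad_null by (rule measure_Un_null_set)
  also have "\<dots> \<le> prob E'"
  proof -
    have inc: "incseq G" by (rule incseq_SucI) (auto simp: G_def gg_mono)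
    have "(\<lambda>T. prob (G T)) \<longlonglongrightarrow> prob (\<Union>T. G T)"
      using G_sets inc by (intro finite_Lim_measure_incseq) auto
    then show ?thesis using G_le by (intro LIMSEQ_le_const2) auto
  qed
  finally show ?thesis unfolding E'_def .
qed

lemma main:
  assumes "1 \<le> k" "k \<le> k'" "k' \<le> n"
  shows "prob (E k w) \<le> prob (E k' w)"
  using assms(2)
proof (induction rule: dec_induct)
  case base then show ?case by simp
next
  case (step m)
  have "prob (E m w) \<le> prob (E (Suc m) w)" using step.hyps assms by (intro line_net.step[OF line_net_axioms]) auto
  then show ?case using step.IH by simp
qed

end

theorem proposition1:
  fixes M :: "'a measure" and l n :: nat and p :: "nat \<Rightarrow> real"
    and z :: "nat \<Rightarrow> nat \<Rightarrow> 'a \<Rightarrow> bool"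
    and k k' :: nat and w :: "nat \<Rightarrow> nat"
  assumes "prob_space M"
    and "l \<ge> 2" and "n \<ge> 1"
    and "\<And>i. i \<in> {1..l} \<Longrightarrow> 0 \<le> p i \<and> p i < 1"
    and "prob_space.indep_vars M (\<lambda>_. count_space UNIV) (\<lambda>(t, i). z t i)
           {(t, i). t \<ge> 1 \<and> i \<in> {1..l}}"
    and "\<And>t i. t \<ge> 1 \<Longrightarrow> i \<in> {1..l} \<Longrightarrow>
           measure M {x \<in> space M. z t i x} = 1 - p i"
    and "1 \<le> k" and "k \<le> k'" and "k' \<le> n"
  shows "measure M {x \<in> space M. vec_ge l (Rk n (\<lambda>t i. z t i x) k) w}
       \<le> measure M {x \<in> space M. vec_ge l (Rk n (\<lambda>t i. z t i x) k') w}"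
proof -
  have "line_net M l n p z"
    unfolding line_net_def line_net_axioms_def using assms by auto
  then interpret line_net M l n p z .
  show ?thesis using main[of k k' w] assms unfolding E_def by simp
qed

end
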